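(* If $x$ and $y$ are Schur-finite elements of a $\lambda$-ring $R$, then $x+y$ is Schur-finite.
   Context: $\lambda$-rings are special $\lambda$-rings. For $x\in R$ and a partition $\pi$, $s_\pi(x)=u_x(s_\pi)$, where $s_\pi$ is the Schur function in the ring of symmetric functions $\Lambda=\mathbb{Z}[e_1,e_2,\dots]$ and $u_x:\Lambda\to R$ is the unique $\lambda$-ring homomorphism with $u_x(e_1)=x$ (here $\lambda^n(e_1)=e_n$). A partition $\pi$ contains $\lambda$ if its Young diagram contains that of $\lambda$. An element $x$ is Schur-finite if there is a partition $\lambda$ (a bound) such that $s_\pi(x)=0$ for every partition $\pi$ containing $\lambda$. *)

theory Defs
  imports Main "Jordan_Normal_Form.Determinant"
begin

definition is_partition :: "nat list \<Rightarrow> bool" where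
  "is_partition p \<longleftrightarrow> sorted_wrt (\<ge>) p \<and> 0 \<notin> set p"

definition part_contains :: "nat list \<Rightarrow> nat list \<Rightarrow> bool" where
  "part_contains q la \<longleftrightarrow>
     length la \<le> length q \<and> (\<forall>i < length la. la ! i \<le> q ! i)"

definition conj_part :: "nat list \<Rightarrow> nat list" where
  "conj_part p = map (\<lambda>j. length (filter (\<lambda>r. j < r) p))
                     [0..<(if p = [] then 0 else hd p)]"

definition lam_int :: "(nat \<Rightarrow> 'a::comm_ring_1 \<Rightarrow> 'a) \<Rightarrow> int \<Rightarrow> 'a \<Rightarrow> 'a" where
  "lam_int lam k x = (if k < 0 then 0 else lam (nat k) x)"

text \<open>s_pi(x) = u_x(s_pi), where u_x(e_n) = lambda^n(x). We use the dual
  Jacobi--Trudi expression s_pi = det (e_{q'_i - i + j}) of the Schur function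
  in terms of the elementary symmetric functions, q' the conjugate partition.\<close>
definition schur :: "(nat \<Rightarrow> 'a::comm_ring_1 \<Rightarrow> 'a) \<Rightarrow> nat list \<Rightarrow> 'a \<Rightarrow> 'a" where
  "schur lam p x =
     (let c = conj_part p; m = length c in
      det (mat m m (\<lambda>(i, j). lam_int lam (int (c ! i) - int i + int j) x)))"

text \<open>lambda-ring axioms: lambda^0 = 1, lambda^1 = id, additivity, lambda^n(1) = 0 for n >= 2,
  and the product axiom lambda^n(xy) = P_n(lambda^1 x,...,lambda^1 y,...), where the universal
  polynomial P_n is written via the dual Cauchy identity as sum over partitions q of n of
  s_pi(x) s_pi'(y).  (The composition axiom for lambda^m o lambda^n is not included.)\<close>
definition lambda_ring :: "(nat \<Rightarrow> 'a::comm_ring_1 \<Rightarrow> 'a) \<Rightarrow> bool" where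
  "lambda_ring lam \<longleftrightarrow>
     (\<forall>x. lam 0 x = 1) \<and>
     (\<forall>x. lam 1 x = x) \<and>
     (\<forall>n x y. lam n (x + y) = (\<Sum>i\<le>n. lam i x * lam (n - i) y)) \<and>
     (\<forall>n\<ge>2. lam n 1 = 0) \<and>
     (\<forall>n x y. lam n (x * y) =
        (\<Sum>p\<in>{p. is_partition p \<and> sum_list p = n}. schur lam p x * schur lam (conj_part p) y))"

definition schur_finite :: "(nat \<Rightarrow> 'a::comm_ring_1 \<Rightarrow> 'a) \<Rightarrow> 'a \<Rightarrow> bool" where
  "schur_finite lam x \<longleftrightarrow>
     (\<exists>la. is_partition la \<and>
        (\<forall>q. is_partition q \<and> part_contains q la \<longrightarrow> schur lam q x = 0))"

end

theory Submission
  imports Defs "HOL-Combinatorics.Permutations" "HOL-Library.FuncSet"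
begin

definition en :: "nat set \<Rightarrow> nat \<Rightarrow> nat" where
  "en S i = sorted_list_of_set S ! i"

definition idx :: "nat set \<Rightarrow> nat \<Rightarrow> nat" where
  "idx S v = inv_into {..<card S} (en S) v"

lemma en_bij: "finite S \<Longrightarrow> bij_betw (en S) {..<card S} S"
  unfolding en_def
  by (rule bij_betw_nth) (auto simp: sorted_list_of_set.length_sorted_key_list_of_set)

lemma en_in: "finite S \<Longrightarrow> i < card S \<Longrightarrow> en S i \<in> S"
  using en_bij bij_betwE by blast

lemma en_mono: "finite S \<Longrightarrow> i < j \<Longrightarrow> j < card S \<Longrightarrow> en S i < en S j"
  unfolding en_def
  using sorted_list_of_set.strict_sorted_key_list_of_set[of S]
  by (simp add: sorted_wrt_nth_less)

lemma en_mono_le: "finite S \<Longrightarrow> i \<le> j \<Longrightarrow> j < card S \<Longrightarrow> en S i \<le> en S j"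
  using en_mono[of S i j] by (cases "i = j") auto

lemma idx_bij: "finite S \<Longrightarrow> bij_betw (idx S) S {..<card S}"
  unfolding idx_def using en_bij bij_betw_inv_into by blast

lemma idx_en[simp]: "finite S \<Longrightarrow> i < card S \<Longrightarrow> idx S (en S i) = i"
  unfolding idx_def using en_bij bij_betw_inv_into_left by fastforce

lemma en_idx[simp]: "finite S \<Longrightarrow> v \<in> S \<Longrightarrow> en S (idx S v) = v"
  unfolding idx_def using en_bij bij_betw_inv_into_right by fastforce

lemma idx_lt: "finite S \<Longrightarrow> v \<in> S \<Longrightarrow> idx S v < card S"
  using idx_bij bij_betwE by blast

lemma en_image_strict_mono:
  assumes "\<And>i j. i < j \<Longrightarrow> j < m \<Longrightarrow> f i < f j" "i < m"
  shows "en (f ` {..<m}) i = f i"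
proof -
  have s: "sorted_wrt (<) (map f [0..<m])"
    using assms(1) by (auto simp: sorted_wrt_iff_nth_less)
  have "sorted_list_of_set (set (map f [0..<m])) = map f [0..<m]"
    using s by (intro sorted_list_of_set.idem_if_sorted_distinct)
      (auto simp: strict_sorted_iff)
  moreover have "set (map f [0..<m]) = f ` {..<m}" by auto
  ultimately show ?thesis using assms(2) unfolding en_def by simp
qed

lemma permutes_lt: "q permutes {..<n} \<Longrightarrow> i < n \<Longrightarrow> q i < n"
  using permutes_in_image[of q "{..<n}" i] by simp

definition ld :: "nat \<Rightarrow> (nat \<Rightarrow> nat \<Rightarrow> 'a::comm_ring_1) \<Rightarrow> 'a" where
  "ld n f = (\<Sum>q\<in>{q. q permutes {..<n}}. of_int (sign q) * (\<Prod>i<n. f i (q i)))"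

lemma det_ld: "det (mat n n (\<lambda>(i,j). f i j)) = ld n f"
proof -
  have "det (mat n n (\<lambda>(i,j). f i j)) = (\<Sum>p\<in>{p. p permutes {0..<n}}.
     of_int (sign p) * (\<Prod>i=0..<n. mat n n (\<lambda>(i,j). f i j) $$ (i, p i)))"
    by (rule det_def') auto
  also have "\<dots> = ld n f" unfolding ld_def atLeast0LessThan
    by (intro sum.cong refl arg_cong2[where f="(*)"] prod.cong)
       (auto simp: permutes_lt)
  finally show ?thesis .
qed

lemma ld_cong: "(\<And>i j. i < n \<Longrightarrow> j < n \<Longrightarrow> f i j = g i j) \<Longrightarrow> ld n f = ld n g"
  unfolding ld_def
  by (intro sum.cong refl arg_cong2[where f="(*)"] prod.cong) (auto simp: permutes_lt)

definition mg :: "nat \<Rightarrow> nat \<Rightarrow> nat set \<Rightarrow> nat \<Rightarrow> nat" where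
  "mg n p S i = (if i < p then en S i else if i < n then en ({..<n} - S) (i - p) else i)"

definition sh :: "nat \<Rightarrow> nat \<Rightarrow> (nat \<Rightarrow> nat) \<Rightarrow> nat \<Rightarrow> nat" where
  "sh n p t i = (if i \<in> {p..<n} then p + t (i - p) else i)"

lemma shift_bij: assumes "p \<le> (n::nat)" shows "bij_betw ((+) p) {..<n - p} {p..<n}"
proof (rule bij_betw_imageI)
  show "inj_on ((+) p) {..<n - p}" by (simp add: inj_on_def)
  have "(+) p ` {0..<n - p} = {p..<n}" using assms by simp
  then show "(+) p ` {..<n - p} = {p..<n}" by (simp add: atLeast0LessThan)
qed

lemma sh_permutes_sign:
  assumes "t permutes {..<n-p}" "p \<le> n"
  shows "sh n p t permutes {..<n}" "sign (sh n p t) = sign t"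
proof -
  have pb: "permutes_bij_finite t {..<n-p} {p..<n} ((+) p) (\<lambda>i. i - p)"
    unfolding permutes_bij_finite_def permutes_bij_def permutes_bij_finite_axioms_def
    using assms shift_bij[OF assms(2)] by auto
  have e: "sh n p t = (\<lambda>x. if x \<in> {p..<n} then p + t (x - p) else x)"
    by (simp add: sh_def fun_eq_iff)
  show "sign (sh n p t) = sign t" unfolding e
    using permutes_bij_finite.sign_p'[OF pb] by simp
  have "(\<lambda>x. if x \<in> {p..<n} then p + t (x - p) else x) permutes {p..<n}"
    using permutes_bij.permutes_p'[OF pb[unfolded permutes_bij_finite_def, THEN conjunct1]] by simp
  then show "sh n p t permutes {..<n}" unfolding e
    by (rule permutes_subset) auto
qed

definition psi :: "nat \<Rightarrow> nat \<Rightarrow> nat set \<Rightarrow> (nat \<Rightarrow> nat) \<Rightarrow> (nat \<Rightarrow> nat) \<Rightarrow> nat \<Rightarrow> nat" where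
  "psi n p S t1 t2 i = (if i < p then en S (t1 i) else if i < n then en ({..<n} - S) (t2 (i - p)) else i)"

lemma co_card: "S \<subseteq> {..<n} \<Longrightarrow> card ({..<n} - S) = n - card S"
  by (simp add: card_Diff_subset finite_subset)

lemma minus_bij: assumes "p \<le> (n::nat)" shows "bij_betw (\<lambda>i. i - p) {p..<n} {..<n - p}"
proof (rule bij_betw_imageI)
  show "inj_on (\<lambda>i. i - p) {p..<n}"
    by (rule inj_onI) auto
  show "(\<lambda>i. i - p) ` {p..<n} = {..<n - p}"
    using assms by (cases "p < n") (auto simp: image_minus_const_atLeastLessThan_nat)
qed

lemma mg_permutes:
  assumes S: "S \<subseteq> {..<n}" "card S = p"
  shows "mg n p S permutes {..<n}"
proof (rule bij_imp_permutes)
  have fS: "finite S" using S finite_subset by blast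
  have pn: "p \<le> n" using S card_mono[of "{..<n}" S] by auto
  have "bij_betw (mg n p S) {..<p} S \<longleftrightarrow> bij_betw (en S) {..<p} S"
    by (rule bij_betw_cong) (simp add: mg_def)
  then have b1: "bij_betw (mg n p S) {..<p} S" using en_bij[OF fS] S(2) by simp
  have b2: "bij_betw (en ({..<n} - S) \<circ> (\<lambda>i. i - p)) {p..<n} ({..<n} - S)"
    by (rule bij_betw_trans[OF minus_bij[OF pn]])
       (use en_bij[of "{..<n} - S"] co_card[OF S(1)] S(2) in auto)
  have "bij_betw (mg n p S) {p..<n} ({..<n} - S) \<longleftrightarrow>
      bij_betw (en ({..<n} - S) \<circ> (\<lambda>i. i - p)) {p..<n} ({..<n} - S)"
    by (rule bij_betw_cong) (simp add: mg_def)
  then have b2': "bij_betw (mg n p S) {p..<n} ({..<n} - S)" using b2 by simp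
  have "bij_betw (mg n p S) ({..<p} \<union> {p..<n}) (S \<union> ({..<n} - S))"
    by (rule bij_betw_combine[OF b1 b2']) auto
  moreover have "{..<p} \<union> {p..<n} = {..<n}" using pn by auto
  moreover have "S \<union> ({..<n} - S) = {..<n}" using S by auto
  ultimately show "bij_betw (mg n p S) {..<n} {..<n}" by simp
  show "\<And>x. x \<notin> {..<n} \<Longrightarrow> mg n p S x = x" using pn by (auto simp: mg_def)
qed

lemma psi_eq:
  assumes "t1 permutes {..<p}" "t2 permutes {..<n-p}" "p \<le> n"
  shows "psi n p S t1 t2 = mg n p S \<circ> t1 \<circ> sh n p t2"
proof
  fix i
  show "psi n p S t1 t2 i = (mg n p S \<circ> t1 \<circ> sh n p t2) i"
  proof (cases "i < p")
    case True
    then show ?thesis using permutes_lt[OF assms(1) True]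
      by (simp add: psi_def mg_def sh_def)
  next
    case False
    show ?thesis
    proof (cases "i < n")
      case True
      have "t2 (i - p) < n - p" using permutes_lt[OF assms(2)] True False by auto
      then have "t1 (p + t2 (i - p)) = p + t2 (i - p)"
        using assms(1) by (intro permutes_not_in) auto
      moreover have "p + t2 (i - p) < n" using \<open>t2 (i - p) < n - p\<close> by simp
      ultimately show ?thesis using True False
        by (simp add: psi_def mg_def sh_def)
    next
      case F2: False
      then have "t1 i = i" using assms(1) False by (intro permutes_not_in) auto
      then show ?thesis using False F2 by (simp add: psi_def mg_def sh_def)
    qed
  qed
qed


lemma psi_permutes:
  assumes "t1 permutes {..<p}" "t2 permutes {..<n-p}" "S \<subseteq> {..<n}" "card S = p"
  shows "psi n p S t1 t2 permutes {..<n}"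
proof -
  have pn: "p \<le> n" using assms card_mono[of "{..<n}" S] by auto
  show ?thesis unfolding psi_eq[OF assms(1,2) pn]
    by (intro permutes_compose sh_permutes_sign(1)[OF assms(2) pn] mg_permutes[OF assms(3,4)]
        permutes_subset[OF assms(1)]) (use pn in auto)
qed

lemma psi_sign:
  assumes "t1 permutes {..<p}" "t2 permutes {..<n-p}" "S \<subseteq> {..<n}" "card S = p"
  shows "sign (psi n p S t1 t2) = sign (mg n p S) * sign t1 * sign t2"
proof -
  have pn: "p \<le> n" using assms card_mono[of "{..<n}" S] by auto
  have pm: "permutation (mg n p S)" "permutation t1" "permutation (sh n p t2)"
    using mg_permutes[OF assms(3,4)] assms(1) sh_permutes_sign(1)[OF assms(2) pn]
    by (auto simp: permutation_permutes)
  show ?thesis unfolding psi_eq[OF assms(1,2) pn]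
    using pm sh_permutes_sign(2)[OF assms(2) pn]
    by (simp add: sign_compose permutation_compose)
qed

lemma psi_prod:
  assumes "p \<le> n"
  shows "(\<Prod>i<n. f i (psi n p S t1 t2 i)) =
    (\<Prod>i<p. f i (en S (t1 i))) * (\<Prod>i<n-p. f (p+i) (en ({..<n} - S) (t2 i)))"
proof -
  have u: "{..<n} = {..<p} \<union> {p..<n}" using assms by auto
  have "(\<Prod>i<n. f i (psi n p S t1 t2 i)) =
     (\<Prod>i<p. f i (psi n p S t1 t2 i)) * (\<Prod>i\<in>{p..<n}. f i (psi n p S t1 t2 i))"
    unfolding u by (rule prod.union_disjoint) auto
  also have "(\<Prod>i<p. f i (psi n p S t1 t2 i)) = (\<Prod>i<p. f i (en S (t1 i)))"
    by (rule prod.cong) (auto simp: psi_def)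
  also have "(\<Prod>i\<in>{p..<n}. f i (psi n p S t1 t2 i)) = (\<Prod>i\<in>(+) p ` {..<n-p}. f i (psi n p S t1 t2 i))"
    using shift_bij[OF assms] by (simp add: bij_betw_def)
  also have "\<dots> = (\<Prod>i<n-p. f (p+i) (psi n p S t1 t2 (p+i)))"
    by (subst prod.reindex) (auto simp: inj_on_def)
  also have "\<dots> = (\<Prod>i<n-p. f (p+i) (en ({..<n} - S) (t2 i)))"
    by (rule prod.cong) (auto simp: psi_def)
  finally show ?thesis .
qed

lemma laplace:
  fixes f :: "nat \<Rightarrow> nat \<Rightarrow> 'a::comm_ring_1"
  assumes pn: "p \<le> n"
  shows "ld n f = (\<Sum>S\<in>{S. S \<subseteq> {..<n} \<and> card S = p}. of_int (sign (mg n p S)) *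
      ld p (\<lambda>i j. f i (en S j)) * ld (n-p) (\<lambda>i j. f (p+i) (en ({..<n} - S) j)))"
proof -
  let ?P = "\<lambda>m. {q. q permutes {..<m::nat}}"
  let ?Sub = "{S. S \<subseteq> {..<n} \<and> card S = p}"
  let ?F = "\<lambda>q. (of_int (sign q) :: 'a) * (\<Prod>i<n. f i (q i))"
  have fin: "finite (?P m)" for m by (simp add: finite_permutations)
  have finSub: "finite ?Sub"
    by (rule finite_subset[of _ "Pow {..<n}"]) auto
  have 1: "ld n f = (\<Sum>S\<in>?Sub. \<Sum>q\<in>{q. q \<in> ?P n \<and> q ` {..<p} = S}. ?F q)"
    unfolding ld_def
  proof (rule sum.group[symmetric, OF fin finSub])
    show "(\<lambda>q. q ` {..<p}) ` ?P n \<subseteq> ?Sub"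
    proof clarsimp
      fix q assume q: "q permutes {..<n}"
      show "q ` {..<p} \<subseteq> {..<n} \<and> card (q ` {..<p}) = p"
      proof
        show "q ` {..<p} \<subseteq> {..<n}" using permutes_lt[OF q] pn by auto
        show "card (q ` {..<p}) = p"
          using permutes_inj[OF q] by (simp add: card_image inj_on_subset)
      qed
    qed
  qed
  have 2: "(\<Sum>q\<in>{q. q \<in> ?P n \<and> q ` {..<p} = S}. ?F q) =
     of_int (sign (mg n p S)) * ld p (\<lambda>i j. f i (en S j)) * ld (n-p) (\<lambda>i j. f (p+i) (en ({..<n} - S) j))"
    if S: "S \<in> ?Sub" for S
  proof -
    let ?C = "{..<n} - S"
    have Ssub: "S \<subseteq> {..<n}" and cS: "card S = p" using S by auto
    have fS: "finite S" using Ssub finite_subset by blast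
    have fC: "finite ?C" by simp
    have cC: "card ?C = n - p" using co_card[OF Ssub] cS by simp
    define inv1 where "inv1 q = (\<lambda>i. if i < p then idx S (q i) else i)" for q :: "nat \<Rightarrow> nat"
    define inv2 where "inv2 q = (\<lambda>i. if i < n - p then idx ?C (q (p + i)) else i)" for q :: "nat \<Rightarrow> nat"
    have "(\<Sum>q\<in>{q. q \<in> ?P n \<and> q ` {..<p} = S}. ?F q) =
        (\<Sum>tt\<in>?P p \<times> ?P (n-p). ?F (psi n p S (fst tt) (snd tt)))"
    proof (rule sum.reindex_bij_witness[symmetric, where j="\<lambda>tt. psi n p S (fst tt) (snd tt)"
          and i="\<lambda>q. (inv1 q, inv2 q)"])
      fix tt assume tt: "tt \<in> ?P p \<times> ?P (n-p)"
      obtain t1 t2 where tt': "tt = (t1, t2)" by force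
      have t1: "t1 permutes {..<p}" and t2: "t2 permutes {..<n-p}" using tt tt' by auto
      show "psi n p S (fst tt) (snd tt) \<in> {q. q \<in> ?P n \<and> q ` {..<p} = S}"
      proof (simp add: tt', intro conjI)
        show "psi n p S t1 t2 permutes {..<n}" by (rule psi_permutes[OF t1 t2 Ssub cS])
        have "psi n p S t1 t2 ` {..<p} = en S ` (t1 ` {..<p})"
          by (auto simp: psi_def image_iff permutes_lt[OF t1])
        also have "t1 ` {..<p} = {..<p}" by (rule permutes_image[OF t1])
        also have "en S ` {..<p} = S" using en_bij[OF fS] cS by (simp add: bij_betw_def)
        finally show "psi n p S t1 t2 ` {..<p} = S" .
      qed
      show "(inv1 (psi n p S (fst tt) (snd tt)), inv2 (psi n p S (fst tt) (snd tt))) = tt"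
      proof (simp add: tt', intro conjI ext)
        fix i show "inv1 (psi n p S t1 t2) i = t1 i"
          using permutes_lt[OF t1, of i] permutes_not_in[OF t1, of i] fS cS
          by (auto simp: inv1_def psi_def)
        show "inv2 (psi n p S t1 t2) i = t2 i"
          using permutes_lt[OF t2, of i] permutes_not_in[OF t2, of i] fC cC
          by (auto simp: inv2_def psi_def)
      qed
    next
      fix q assume q: "q \<in> {q. q \<in> ?P n \<and> q ` {..<p} = S}"
      then have qp: "q permutes {..<n}" and qS: "q ` {..<p} = S" by auto
      have qlt: "i < n \<Longrightarrow> q i < n" for i using permutes_lt[OF qp] .
      have qC: "q i \<in> ?C" if "p \<le> i" "i < n" for i
      proof -
        have "q i \<notin> S"
        proof
          assume "q i \<in> S"
          then obtain k where k: "k < p" "q k = q i" using qS by auto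
          have "k = i" using permutes_inj[OF qp] k(2) by (simp add: inj_eq)
          then show False using k(1) that(1) by simp
        qed
        then show ?thesis using qlt that by auto
      qed
      have qS': "i < p \<Longrightarrow> q i \<in> S" for i using qS by auto
      show "psi n p S (fst (inv1 q, inv2 q)) (snd (inv1 q, inv2 q)) = q"
      proof
        fix i
        show "psi n p S (fst (inv1 q, inv2 q)) (snd (inv1 q, inv2 q)) i = q i"
        proof (cases "i < p")
          case True then show ?thesis using qS'[OF True] fS by (simp add: psi_def inv1_def)
        next
          case False
          show ?thesis
          proof (cases "i < n")
            case True
            have "i - p < n - p" "p + (i - p) = i" using True False by auto
            then show ?thesis using qC[of i] False True fC by (simp add: psi_def inv2_def)
          next
            case F2: False
            then show ?thesis using permutes_not_in[OF qp, of i] False by (simp add: psi_def)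
          qed
        qed
      qed
      show "(inv1 q, inv2 q) \<in> ?P p \<times> ?P (n-p)"
      proof (simp, intro conjI)
        show "inv1 q permutes {..<p}"
        proof (rule bij_imp_permutes)
          have "bij_betw q {..<p} S" using qS permutes_inj[OF qp]
            by (auto simp: bij_betw_def intro: inj_on_subset[of q UNIV])
          then have "bij_betw (idx S \<circ> q) {..<p} {..<p}"
            using idx_bij[OF fS] cS by (auto intro: bij_betw_trans)
          moreover have "bij_betw (inv1 q) {..<p} {..<p} \<longleftrightarrow> bij_betw (idx S \<circ> q) {..<p} {..<p}"
            by (rule bij_betw_cong) (simp add: inv1_def)
          ultimately show "bij_betw (inv1 q) {..<p} {..<p}" by simp
        qed (simp add: inv1_def)
        show "inv2 q permutes {..<n-p}"
        proof (rule bij_imp_permutes)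
          have qC': "q ` {p..<n} = ?C"
          proof
            show "q ` {p..<n} \<subseteq> ?C" using qC by auto
            show "?C \<subseteq> q ` {p..<n}"
            proof
              fix v assume v: "v \<in> ?C"
              then have "v \<in> q ` {..<n}" using permutes_image[OF qp] by simp
              then obtain k where k: "k < n" "q k = v" by auto
              have "\<not> k < p" using k v qS by auto
              then show "v \<in> q ` {p..<n}" using k by auto
            qed
          qed
          have "bij_betw q {p..<n} ?C" using qC' permutes_inj[OF qp]
            by (auto simp: bij_betw_def intro: inj_on_subset[of q UNIV])
          then have "bij_betw (idx ?C \<circ> q \<circ> (+) p) {..<n-p} {..<n-p}"
            using idx_bij[OF fC] cC shift_bij[OF pn] by (auto intro: bij_betw_trans)
          moreover have "bij_betw (inv2 q) {..<n-p} {..<n-p} \<longleftrightarrow> bij_betw (idx ?C \<circ> q \<circ> (+) p) {..<n-p} {..<n-p}"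
            by (rule bij_betw_cong) (simp add: inv2_def)
          ultimately show "bij_betw (inv2 q) {..<n-p} {..<n-p}" by simp
        qed (simp add: inv2_def)
      qed
    qed simp
    also have "\<dots> = (\<Sum>tt\<in>?P p \<times> ?P (n-p). of_int (sign (mg n p S)) *
        ((of_int (sign (fst tt)) * (\<Prod>i<p. f i (en S (fst tt i)))) *
         (of_int (sign (snd tt)) * (\<Prod>i<n-p. f (p+i) (en ?C (snd tt i))))))"
    proof (rule sum.cong[OF refl])
      fix tt assume tt: "tt \<in> ?P p \<times> ?P (n-p)"
      then have t1: "fst tt permutes {..<p}" and t2: "snd tt permutes {..<n-p}" by auto
      show "?F (psi n p S (fst tt) (snd tt)) = of_int (sign (mg n p S)) *
        ((of_int (sign (fst tt)) * (\<Prod>i<p. f i (en S (fst tt i)))) *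
         (of_int (sign (snd tt)) * (\<Prod>i<n-p. f (p+i) (en ?C (snd tt i)))))"
        unfolding psi_sign[OF t1 t2 Ssub cS] psi_prod[OF pn] by (simp add: ac_simps)
    qed
    also have "\<dots> = of_int (sign (mg n p S)) * (\<Sum>t1\<in>?P p. \<Sum>t2\<in>?P (n-p).
        ((of_int (sign t1) * (\<Prod>i<p. f i (en S (t1 i)))) *
         (of_int (sign t2) * (\<Prod>i<n-p. f (p+i) (en ?C (t2 i))))))"
      by (simp add: sum.cartesian_product split_def sum_distrib_left)
    also have "\<dots> = of_int (sign (mg n p S)) * ld p (\<lambda>i j. f i (en S j)) * ld (n-p) (\<lambda>i j. f (p+i) (en ?C j))"
      unfolding ld_def by (simp only: sum_product mult.assoc)
    finally show ?thesis .
  qed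
  show ?thesis unfolding 1 by (rule sum.cong) (use 2 in auto)
qed

lemma ld_identical_rows:
  assumes "i < n" "i' < n" "i \<noteq> i'" "\<And>j. j < n \<Longrightarrow> g i j = g i' j"
  shows "ld n g = 0"
proof -
  have "det (mat n n (\<lambda>(i,j). g i j)) = 0"
    by (rule det_identical_rows[OF _ assms(3,1,2)]) (auto simp: assms(1,2,4) row_mat)
  then show ?thesis by (simp add: det_ld)
qed

lemma ld_permute_rows:
  assumes "t permutes {..<n}"
  shows "ld n (\<lambda>i j. g (t i) j) = of_int (sign t) * ld n g"
proof -
  have tp: "t permutes {0..<n}" using assms by (simp add: atLeast0LessThan)
  have "det (mat n n (\<lambda>(i,j). mat n n (\<lambda>(i,j). g i j) $$ (t i, j))) =
      of_int (sign t) * det (mat n n (\<lambda>(i,j). g i j))"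
    by (rule det_permute_rows[OF _ tp]) auto
  moreover have "mat n n (\<lambda>(i,j). mat n n (\<lambda>(i,j). g i j) $$ (t i, j)) = mat n n (\<lambda>(i,j). g (t i) j)"
    by (rule eq_matI) (auto simp: permutes_lt[OF assms])
  ultimately show ?thesis by (simp add: det_ld)
qed


lemma cauchy_binet:
  fixes A B :: "nat \<Rightarrow> nat \<Rightarrow> 'a::comm_ring_1"
  shows "ld n (\<lambda>i j. \<Sum>k<N. A i k * B k j) =
    (\<Sum>S\<in>{S. S \<subseteq> {..<N} \<and> card S = n}. ld n (\<lambda>i j. A i (en S j)) * ld n (\<lambda>i j. B (en S i) j))"
proof -
  let ?P = "{q. q permutes {..<n}}"
  let ?Phi = "PiE {..<n} (\<lambda>_. {..<N})"
  let ?Sub = "{S. S \<subseteq> {..<N} \<and> card S = n}"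
  let ?D = "\<lambda>\<phi>. ld n (\<lambda>i j. B (\<phi> i) j)"
  have finP: "finite ?P" by (simp add: finite_permutations)
  have finPhi: "finite ?Phi" by (simp add: finite_PiE)
  have finSub: "finite ?Sub" by (rule finite_subset[of _ "Pow {..<N}"]) auto
  have "ld n (\<lambda>i j. \<Sum>k<N. A i k * B k j) =
      (\<Sum>q\<in>?P. of_int (sign q) * (\<Sum>\<phi>\<in>?Phi. \<Prod>i<n. A i (\<phi> i) * B (\<phi> i) (q i)))"
    unfolding ld_def by (subst prod_sum_PiE) auto
  also have "\<dots> = (\<Sum>\<phi>\<in>?Phi. (\<Prod>i<n. A i (\<phi> i)) * ?D \<phi>)"
    unfolding ld_def sum_distrib_left
    by (subst sum.swap) (simp add: prod.distrib mult_ac)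
  also have "\<dots> = (\<Sum>\<phi>\<in>{\<phi>\<in>?Phi. inj_on \<phi> {..<n}}. (\<Prod>i<n. A i (\<phi> i)) * ?D \<phi>)"
  proof (rule sum.mono_neutral_right[OF finPhi])
    show "\<forall>\<phi>\<in>?Phi - {\<phi>\<in>?Phi. inj_on \<phi> {..<n}}. (\<Prod>i<n. A i (\<phi> i)) * ?D \<phi> = 0"
    proof
      fix \<phi> assume "\<phi> \<in> ?Phi - {\<phi>\<in>?Phi. inj_on \<phi> {..<n}}"
      then obtain i i' where "i < n" "i' < n" "i \<noteq> i'" "\<phi> i = \<phi> i'"
        by (auto simp: inj_on_def)
      then have "?D \<phi> = 0" by (intro ld_identical_rows[of i n i']) auto
      then show "(\<Prod>i<n. A i (\<phi> i)) * ?D \<phi> = 0" by simp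
    qed
  qed auto
  also have "\<dots> = (\<Sum>S\<in>?Sub. \<Sum>\<phi>\<in>{\<phi>. \<phi> \<in> {\<phi>\<in>?Phi. inj_on \<phi> {..<n}} \<and> \<phi> ` {..<n} = S}.
       (\<Prod>i<n. A i (\<phi> i)) * ?D \<phi>)"
  proof (rule sum.group[symmetric])
    show "finite {\<phi>\<in>?Phi. inj_on \<phi> {..<n}}" using finPhi by simp
    show "(\<lambda>\<phi>. \<phi> ` {..<n}) ` {\<phi>\<in>?Phi. inj_on \<phi> {..<n}} \<subseteq> ?Sub"
      by (auto simp: card_image PiE_def Pi_def)
  qed (rule finSub)
  also have "\<dots> = (\<Sum>S\<in>?Sub. ld n (\<lambda>i j. A i (en S j)) * ld n (\<lambda>i j. B (en S i) j))"
  proof (rule sum.cong[OF refl])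
    fix S assume S: "S \<in> ?Sub"
    then have Ssub: "S \<subseteq> {..<N}" and cS: "card S = n" by auto
    have fS: "finite S" using Ssub finite_subset by blast
    define emb where "emb t = (\<lambda>i. if i < n then en S (t i) else undefined)" for t :: "nat \<Rightarrow> nat"
    define ret where "ret \<phi> = (\<lambda>i. if i < n then idx S (\<phi> i) else i)" for \<phi> :: "nat \<Rightarrow> nat"
    have "(\<Sum>\<phi>\<in>{\<phi>. \<phi> \<in> {\<phi>\<in>?Phi. inj_on \<phi> {..<n}} \<and> \<phi> ` {..<n} = S}.
       (\<Prod>i<n. A i (\<phi> i)) * ?D \<phi>) = (\<Sum>t\<in>?P. (\<Prod>i<n. A i (emb t i)) * ?D (emb t))"
    proof (rule sum.reindex_bij_witness[symmetric, where j=emb and i=ret])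
      fix t assume t: "t \<in> ?P"
      then have tp: "t permutes {..<n}" by simp
      show "ret (emb t) = t"
        using permutes_lt[OF tp] permutes_not_in[OF tp] fS cS
        by (auto simp: ret_def emb_def fun_eq_iff)
      have "emb t ` {..<n} = en S ` (t ` {..<n})"
        by (auto simp: emb_def image_iff)
      also have "\<dots> = S" using permutes_image[OF tp] en_bij[OF fS] cS by (simp add: bij_betw_def)
      finally have im: "emb t ` {..<n} = S" .
      have inj: "inj_on (emb t) {..<n}"
      proof (rule inj_onI)
        fix i i' assume "i \<in> {..<n}" "i' \<in> {..<n}" "emb t i = emb t i'"
        then have "en S (t i) = en S (t i')" "t i < n" "t i' < n"
          using permutes_lt[OF tp] by (auto simp: emb_def)
        then have "t i = t i'" using bij_betw_imp_inj_on[OF en_bij[OF fS]] cS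
          by (auto dest: inj_onD)
        then show "i = i'" using permutes_inj[OF tp] by (simp add: inj_eq)
      qed
      show "emb t \<in> {\<phi>. \<phi> \<in> {\<phi>\<in>?Phi. inj_on \<phi> {..<n}} \<and> \<phi> ` {..<n} = S}"
        using im inj Ssub by (auto simp: PiE_def Pi_def emb_def extensional_def)
    next
      fix \<phi> assume \<phi>: "\<phi> \<in> {\<phi>. \<phi> \<in> {\<phi>\<in>?Phi. inj_on \<phi> {..<n}} \<and> \<phi> ` {..<n} = S}"
      then have ext: "\<And>i. \<not> i < n \<Longrightarrow> \<phi> i = undefined" and inj: "inj_on \<phi> {..<n}"
        and im: "\<phi> ` {..<n} = S" by (auto simp: PiE_def extensional_def)
      have inS: "i < n \<Longrightarrow> \<phi> i \<in> S" for i using im by auto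
      show "emb (ret \<phi>) = \<phi>"
        using inS fS ext by (auto simp: emb_def ret_def fun_eq_iff)
      show "ret \<phi> \<in> ?P"
      proof (simp, rule bij_imp_permutes)
        have "bij_betw \<phi> {..<n} S" using inj im by (simp add: bij_betw_def)
        then have "bij_betw (idx S \<circ> \<phi>) {..<n} {..<n}"
          using idx_bij[OF fS] cS by (auto intro: bij_betw_trans)
        moreover have "bij_betw (ret \<phi>) {..<n} {..<n} \<longleftrightarrow> bij_betw (idx S \<circ> \<phi>) {..<n} {..<n}"
          by (rule bij_betw_cong) (simp add: ret_def)
        ultimately show "bij_betw (ret \<phi>) {..<n} {..<n}" by simp
      qed (simp add: ret_def)
    qed simp
    also have "\<dots> = (\<Sum>t\<in>?P. (of_int (sign t) * (\<Prod>i<n. A i (en S (t i)))) * ?D (en S))"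
    proof (rule sum.cong[OF refl])
      fix t assume "t \<in> ?P"
      then have tp: "t permutes {..<n}" by simp
      have "?D (emb t) = ld n (\<lambda>i j. B (en S (t i)) j)"
        by (rule ld_cong) (auto simp: emb_def)
      also have "\<dots> = of_int (sign t) * ?D (en S)"
        by (rule ld_permute_rows[OF tp, of "\<lambda>i j. B (en S i) j"])
      finally have "?D (emb t) = of_int (sign t) * ?D (en S)" .
      moreover have "(\<Prod>i<n. A i (emb t i)) = (\<Prod>i<n. A i (en S (t i)))"
        by (rule prod.cong) (auto simp: emb_def)
      ultimately show "(\<Prod>i<n. A i (emb t i)) * ?D (emb t) =
          (of_int (sign t) * (\<Prod>i<n. A i (en S (t i)))) * ?D (en S)"
        by (simp add: mult_ac)
    qed
    also have "\<dots> = ld n (\<lambda>i j. A i (en S j)) * ld n (\<lambda>i j. B (en S i) j)"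
      unfolding ld_def[of n "\<lambda>i j. A i (en S j)"] by (simp add: sum_distrib_right)
    finally show "(\<Sum>\<phi>\<in>{\<phi>. \<phi> \<in> {\<phi>\<in>?Phi. inj_on \<phi> {..<n}} \<and> \<phi> ` {..<n} = S}.
       (\<Prod>i<n. A i (\<phi> i)) * ?D \<phi>) = ld n (\<lambda>i j. A i (en S j)) * ld n (\<lambda>i j. B (en S i) j)" .
  qed
  finally show ?thesis .
qed

lemma ld_transpose: "ld n (\<lambda>i j. g j i) = ld n g"
proof -
  have "det (transpose_mat (mat n n (\<lambda>(i,j). g i j))) = det (mat n n (\<lambda>(i,j). g i j))"
    by (rule det_transpose) auto
  moreover have "transpose_mat (mat n n (\<lambda>(i,j). g i j)) = mat n n (\<lambda>(i,j). g j i)"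
    by (rule eq_matI) auto
  ultimately show ?thesis by (simp add: det_ld)
qed

lemma ld_permute_cols:
  assumes "t permutes {..<n}"
  shows "ld n (\<lambda>i j. g i (t j)) = of_int (sign t) * ld n g"
proof -
  have "ld n (\<lambda>i j. g i (t j)) = ld n (\<lambda>i j. g j (t i))" by (rule ld_transpose[symmetric])
  also have "\<dots> = of_int (sign t) * ld n (\<lambda>i j. g j i)"
    by (rule ld_permute_rows[OF assms, of "\<lambda>i j. g j i"])
  also have "ld n (\<lambda>i j. g j i) = ld n g" by (rule ld_transpose)
  finally show ?thesis .
qed

definition rv :: "nat \<Rightarrow> nat \<Rightarrow> nat" where
  "rv n i = (if i < n then n - 1 - i else i)"

lemma rv_permutes: "rv n permutes {..<n}"
proof (rule bij_imp_permutes)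
  show "bij_betw (rv n) {..<n} {..<n}"
  proof (rule bij_betw_imageI)
    show "inj_on (rv n) {..<n}" by (rule inj_onI) (auto simp: rv_def)
    show "rv n ` {..<n} = {..<n}"
    proof
      show "rv n ` {..<n} \<subseteq> {..<n}" by (auto simp: rv_def)
      show "{..<n} \<subseteq> rv n ` {..<n}"
      proof
        fix x assume "x \<in> {..<n}"
        then show "x \<in> rv n ` {..<n}" by (intro image_eqI[where x="n - 1 - x"]) (auto simp: rv_def)
      qed
    qed
  qed
qed (simp add: rv_def)

lemma ld_reverse: "ld n (\<lambda>i j. g (n - 1 - i) (n - 1 - j)) = ld n g"
proof -
  have "ld n (\<lambda>i j. g (n - 1 - i) (n - 1 - j)) = ld n (\<lambda>i j. g (rv n i) (rv n j))"
    by (rule ld_cong) (simp add: rv_def)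
  also have "\<dots> = of_int (sign (rv n)) * ld n (\<lambda>i j. g i (rv n j))"
    by (rule ld_permute_rows[OF rv_permutes, where g="\<lambda>i j. g i (rv n j)"])
  also have "ld n (\<lambda>i j. g i (rv n j)) = of_int (sign (rv n)) * ld n g"
    by (rule ld_permute_cols[OF rv_permutes])
  finally show ?thesis by (simp add: mult.assoc[symmetric] of_int_mult[symmetric])
qed

definition M :: "(int \<Rightarrow> 'a::comm_ring_1) \<Rightarrow> nat \<Rightarrow> (nat \<Rightarrow> int) \<Rightarrow> (nat \<Rightarrow> int) \<Rightarrow> 'a" where
  "M e n r k = ld n (\<lambda>i j. e (r i - k j))"

definition sdec :: "nat \<Rightarrow> (nat \<Rightarrow> int) \<Rightarrow> bool" where
  "sdec n r \<longleftrightarrow> (\<forall>i j. i < j \<longrightarrow> j < n \<longrightarrow> r j < r i)"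

lemma sdec_le: "sdec n r \<Longrightarrow> i \<le> j \<Longrightarrow> j < n \<Longrightarrow> r j \<le> r i"
  unfolding sdec_def by (cases "i = j") (auto intro: less_imp_le)

definition Full :: "nat \<Rightarrow> nat \<Rightarrow> (int \<Rightarrow> 'a::comm_ring_1) \<Rightarrow> bool" where
  "Full a b e \<longleftrightarrow> (\<forall>r k. sdec a r \<longrightarrow> sdec a k \<longrightarrow> int b \<le> r (a-1) - k 0 + int a - 1 \<longrightarrow> M e a r k = 0)"

definition Top :: "nat \<Rightarrow> nat \<Rightarrow> (int \<Rightarrow> 'a::comm_ring_1) \<Rightarrow> bool" where
  "Top a b e \<longleftrightarrow> (\<forall>n r k. sdec n r \<longrightarrow> sdec n k \<longrightarrow> a \<le> n \<longrightarrow>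
      int b \<le> r (a-1) - k 0 + int a - 1 \<longrightarrow> M e n r k = 0)"

definition Bot :: "nat \<Rightarrow> nat \<Rightarrow> (int \<Rightarrow> 'a::comm_ring_1) \<Rightarrow> bool" where
  "Bot a b e \<longleftrightarrow> (\<forall>n r k. sdec n r \<longrightarrow> sdec n k \<longrightarrow> a \<le> n \<longrightarrow>
      int b \<le> r (n-1) - k (n-a) + int a - 1 \<longrightarrow> M e n r k = 0)"

definition Str :: "nat \<Rightarrow> nat \<Rightarrow> (int \<Rightarrow> 'a::comm_ring_1) \<Rightarrow> bool" where
  "Str a b e \<longleftrightarrow> (\<forall>n r. sdec n r \<longrightarrow> a \<le> n \<longrightarrow>
      int b \<le> r (a-1) + int a - 1 \<longrightarrow> M e n r (\<lambda>j. - int j) = 0)"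

lemma Top_Str: "Top a b e \<Longrightarrow> Str a b e"
  unfolding Top_def Str_def
proof (intro allI impI)
  fix n r assume T: "\<forall>n r k. sdec n r \<longrightarrow> sdec n k \<longrightarrow> a \<le> n \<longrightarrow>
      int b \<le> r (a-1) - k 0 + int a - 1 \<longrightarrow> M e n r k = 0"
    and "sdec n r" "a \<le> n" "int b \<le> r (a-1) + int a - 1"
  moreover have "sdec n (\<lambda>j. - int j)" by (simp add: sdec_def)
  ultimately show "M e n r (\<lambda>j. - int j) = 0" by auto
qed

lemma Str_mono: "Str a b e \<Longrightarrow> b \<le> b' \<Longrightarrow> Str a b' e"
  unfolding Str_def by fastforce

lemma Top_Bot: assumes "Top a b e" "1 \<le> a" shows "Bot a b e"
  unfolding Bot_def
proof (intro allI impI)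
  fix n r k assume r: "sdec n r" and k: "sdec n k" and an: "a \<le> n"
    and c: "int b \<le> r (n-1) - k (n-a) + int a - 1"
  define r' where "r' i = - k (n - 1 - i)" for i
  define k' where "k' j = - r (n - 1 - j)" for j
  have "sdec n r'" using k unfolding sdec_def r'_def by auto
  moreover have "sdec n k'" using r unfolding sdec_def k'_def by auto
  moreover have "int b \<le> r' (a-1) - k' 0 + int a - 1"
  proof -
    have "n - 1 - (a - 1) = n - a" "n - 1 - 0 = n - 1" using an assms(2) by auto
    then show ?thesis using c unfolding r'_def k'_def by simp
  qed
  ultimately have "M e n r' k' = 0" using assms(1) an unfolding Top_def by blast
  moreover have "M e n r' k' = M e n r k"
  proof -
    have "M e n r' k' = ld n (\<lambda>i j. e (r (n - 1 - j) - k (n - 1 - i)))"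
      unfolding M_def r'_def k'_def by (simp add: algebra_simps)
    also have "\<dots> = ld n (\<lambda>i j. e (r (n - 1 - i) - k (n - 1 - j)))"
      by (rule ld_transpose)
    also have "\<dots> = M e n r k" unfolding M_def by (rule ld_reverse)
    finally show ?thesis .
  qed
  ultimately show "M e n r k = 0" by simp
qed


lemma sdec_mono: "sdec n r \<Longrightarrow> m \<le> n \<Longrightarrow> sdec m r"
  unfolding sdec_def by auto

lemma sdec_en:
  assumes "sdec n k" "S \<subseteq> {..<n}" "card S = m"
  shows "sdec m (\<lambda>j. k (en S j))"
  unfolding sdec_def
proof (intro allI impI)
  fix i j assume ij: "i < j" "j < m"
  have fS: "finite S" using assms(2) finite_subset by blast
  have "en S i < en S j" using en_mono[OF fS ij(1)] ij assms(3) by simp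
  moreover have "en S j < n" using en_in[OF fS, of j] ij assms by auto
  ultimately show "k (en S j) < k (en S i)" using assms(1) unfolding sdec_def by blast
qed

lemma Full_Top: assumes F: "Full a b e" and a1: "1 \<le> a" shows "Top a b e"
  unfolding Top_def
proof (intro allI impI)
  fix n r k assume r: "sdec n r" and k: "sdec n k" and an: "a \<le> n"
    and c: "int b \<le> r (a-1) - k 0 + int a - 1"
  have "M e n r k = (\<Sum>S\<in>{S. S \<subseteq> {..<n} \<and> card S = a}. of_int (sign (mg n a S)) *
      ld a (\<lambda>i j. e (r i - k (en S j))) * ld (n-a) (\<lambda>i j. e (r (a+i) - k (en ({..<n} - S) j))))"
    unfolding M_def by (rule laplace[OF an])
  also have "\<dots> = 0"
  proof (rule sum.neutral, intro ballI)
    fix S assume S: "S \<in> {S. S \<subseteq> {..<n} \<and> card S = a}"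
    then have Ss: "S \<subseteq> {..<n}" and cS: "card S = a" by auto
    have fS: "finite S" using Ss finite_subset by blast
    have "en S 0 < n" using en_in[OF fS, of 0] cS a1 Ss by auto
    then have "k (en S 0) \<le> k 0" using sdec_le[OF k, of 0 "en S 0"] by simp
    then have c': "int b \<le> r (a-1) - k (en S 0) + int a - 1" using c by simp
    have "M e a r (\<lambda>j. k (en S j)) = 0"
      using F sdec_mono[OF r an] sdec_en[OF k Ss cS] c' unfolding Full_def by auto
    then show "of_int (sign (mg n a S)) *
      ld a (\<lambda>i j. e (r i - k (en S j))) * ld (n-a) (\<lambda>i j. e (r (a+i) - k (en ({..<n} - S) j))) = 0"
      unfolding M_def by simp
  qed
  finally show "M e n r k = 0" .
qed

lemma sum_en: "finite X \<Longrightarrow> (\<Sum>i<card X. en X i) = \<Sum> X"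
  using sum.reindex_bij_betw[OF en_bij, of X "\<lambda>x. x"] by simp

lemma en_eq_imp_eq:
  assumes "finite X" "finite Y" "card X = card Y" "\<And>i. i < card X \<Longrightarrow> en X i = en Y i"
  shows "X = Y"
proof -
  have "X = en X ` {..<card X}" using en_bij[OF assms(1)] by (simp add: bij_betw_def)
  also have "\<dots> = en Y ` {..<card Y}" using assms(3,4) by (auto simp: image_iff)
  also have "\<dots> = Y" using en_bij[OF assms(2)] by (simp add: bij_betw_def)
  finally show ?thesis .
qed

lemma ld_tri_zero:
  assumes i0: "i0 < n" and z: "\<And>i j. i0 \<le> i \<Longrightarrow> i < n \<Longrightarrow> j \<le> i0 \<Longrightarrow> f i j = 0"
  shows "ld n f = 0"
  unfolding ld_def
proof (rule sum.neutral, intro ballI)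
  fix q assume "q \<in> {q. q permutes {..<n}}"
  then have q: "q permutes {..<n}" by simp
  have "\<exists>i\<in>{i0..<n}. q i \<le> i0"
  proof (rule ccontr)
    assume "\<not> ?thesis"
    then have "q ` {i0..<n} \<subseteq> {Suc i0..<n}" using permutes_lt[OF q] by auto
    moreover have "inj_on q {i0..<n}" using permutes_inj[OF q] by (auto intro: inj_on_subset[of q UNIV])
    ultimately have "card {i0..<n} \<le> card {Suc i0..<n}"
      by (intro card_inj_on_le) auto
    then show False using i0 by simp
  qed
  then obtain i where i: "i0 \<le> i" "i < n" "q i \<le> i0" by auto
  then have "(\<Prod>i<n. f i (q i)) = 0"
    by (intro prod_zero) (auto intro!: bexI[of _ i] z)
  then show "of_int (sign q) * (\<Prod>i<n. f i (q i)) = 0" by simp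
qed

lemma ld_unitri:
  assumes "\<And>i j. j < i \<Longrightarrow> i < n \<Longrightarrow> f i j = 0" "\<And>i. i < n \<Longrightarrow> f i i = 1"
  shows "ld n f = 1"
proof -
  have "det (mat n n (\<lambda>(i,j). f i j)) = prod_list (diag_mat (mat n n (\<lambda>(i,j). f i j)))"
    by (rule det_upper_triangular) (auto simp: upper_triangular_def assms(1))
  also have "\<dots> = 1" unfolding prod_list_diag_prod by (auto simp: assms(2) intro: prod.neutral)
  finally show ?thesis by (simp add: det_ld)
qed

definition good :: "(int \<Rightarrow> 'a::comm_ring_1) \<Rightarrow> bool" where
  "good e \<longleftrightarrow> e 0 = 1 \<and> (\<forall>m<0. e m = 0)"


lemma sign_cancel: "(of_int (sign q) :: 'a::comm_ring_1) * x = 0 \<Longrightarrow> x = 0"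
  by (cases "sign q = 1") (auto simp: sign_def split: if_splits)

lemma Str_Full:
  assumes S: "Str a b e" and a1: "1 \<le> a" and ab: "a \<le> b" and g: "good e"
  shows "Full a b e"
  unfolding Full_def
proof (intro allI impI)
  fix r k1 assume r: "sdec a r" and k1: "sdec a k1" and c1: "int b \<le> r (a-1) - k1 0 + int a - 1"
  define K where "K = r (a-1) + int a - 1 - int b"
  have e0: "e 0 = 1" and eneg: "\<And>m. m < 0 \<Longrightarrow> e m = 0" using g by (auto simp: good_def)
  have main: "\<forall>k. sdec a k \<longrightarrow> k 0 \<le> K \<longrightarrow> nat (\<Sum>j<a. K - k j) = m \<longrightarrow> M e a r k = 0" for m
  proof (induction m rule: less_induct)
    case (less m)
    show ?case
    proof (intro allI impI)
      fix k assume k: "sdec a k" and kK: "k 0 \<le> K" and mk: "nat (\<Sum>j<a. K - k j) = m"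
      have kle: "j < a \<Longrightarrow> k j \<le> k 0" for j using sdec_le[OF k, of 0 j] by simp
      have kge: "j < a \<Longrightarrow> k (a-1) \<le> k j" for j using sdec_le[OF k, of j "a-1"] a1 by simp
      define L where "L = nat (k 0 - k (a-1)) + 1"
      define pos where "pos j = nat (k 0 - k j)" for j
      have pos_mono: "pos i < pos j" if "i < j" "j < a" for i j
        using k that kle[of i] kle[of j] unfolding sdec_def pos_def by force
      have pos_lt: "pos j < L" if "j < a" for j
        using kge[OF that] kle[OF that] unfolding pos_def L_def by auto
      have kpos: "k j = k 0 - int (pos j)" if "j < a" for j
        using kle[OF that] unfolding pos_def by simp
      have kpos': "k 0 - int (pos j) = k j" if "j < a" for j using kpos[OF that] by simp
      define P where "P = pos ` {..<a}"
      have enP: "en P j = pos j" if "j < a" for j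
        unfolding P_def by (rule en_image_strict_mono[OF pos_mono that])
      have injpos: "inj_on pos {..<a}"
        by (rule inj_onI) (metis lessThan_iff nat_neq_iff pos_mono)
      have cP: "card P = a" unfolding P_def using injpos by (simp add: card_image)
      have PL: "P \<subseteq> {..<L}" unfolding P_def using pos_lt by auto
      have fP: "finite P" unfolding P_def by simp
      have aL: "a \<le> L" using card_mono[OF _ PL] cP by simp
      define J where "J = {..<L} - P"
      have cJ: "card J = L - a" unfolding J_def using co_card[OF PL] cP by simp
      have fJ: "finite J" unfolding J_def by simp
      have enJ_lt: "i < L - a \<Longrightarrow> en J i < L" for i using en_in[OF fJ, of i] cJ unfolding J_def by auto
      define row where "row i = (if i < a then r i else k 0 - int (en J (i - a)))" for i
      define gg where "gg i t = e (row i - (k 0 - int t))" for i t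
      have big0: "ld L gg = 0"
      proof -
        have sd: "sdec L (\<lambda>i. row i - k 0)"
          unfolding sdec_def
        proof (intro allI impI)
          fix i j assume ij: "i < j" "j < L"
          show "row j - k 0 < row i - k 0"
          proof (cases "j < a")
            case True then show ?thesis using r ij unfolding sdec_def row_def by auto
          next
            case False
            show ?thesis
            proof (cases "i < a")
              case True
              have "r (a-1) \<le> r i" using sdec_le[OF r, of i "a-1"] True by simp
              moreover have "k 0 < r (a-1)" using c1 ab kK unfolding K_def by simp
              ultimately show ?thesis using True False unfolding row_def by simp
            next
              case F2: False
              have "en J (i - a) < en J (j - a)"
                using en_mono[OF fJ, of "i-a" "j-a"] ij False F2 cJ by auto
              then show ?thesis using False F2 unfolding row_def by simp
            qed
          qed
        qed
        have cc: "int b \<le> (row (a-1) - k 0) + int a - 1"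
          using kK a1 unfolding K_def row_def by simp
        have "M e L (\<lambda>i. row i - k 0) (\<lambda>j. - int j) = 0"
          using S sd aL cc unfolding Str_def by blast
        moreover have "M e L (\<lambda>i. row i - k 0) (\<lambda>j. - int j) = ld L gg"
          unfolding M_def gg_def by (rule ld_cong) (simp add: algebra_simps)
        ultimately show ?thesis by simp
      qed
      let ?Sub = "{S. S \<subseteq> {..<L} \<and> card S = a}"
      define F where "F S = of_int (sign (mg L a S)) * ld a (\<lambda>i j. gg i (en S j)) *
          ld (L-a) (\<lambda>i j. gg (a+i) (en ({..<L} - S) j))" for S
      have lap: "ld L gg = (\<Sum>S\<in>?Sub. F S)" unfolding F_def by (rule laplace[OF aL])
      have finSub: "finite ?Sub" by (rule finite_subset[of _ "Pow {..<L}"]) auto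
      have PSub: "P \<in> ?Sub" using PL cP by simp
      have rest: "F S = 0" if SS: "S \<in> ?Sub - {P}" for S
      proof -
        have Ss: "S \<subseteq> {..<L}" and cS: "card S = a" and SP: "S \<noteq> P" using SS by auto
        have fS: "finite S" using Ss finite_subset by blast
        define C where "C = {..<L} - S"
        have cC: "card C = L - a" unfolding C_def using co_card[OF Ss] cS by simp
        have fC: "finite C" unfolding C_def by simp
        show ?thesis
        proof (cases "ld (L-a) (\<lambda>i j. gg (a+i) (en C j)) = 0")
          case True then show ?thesis unfolding F_def C_def by simp
        next
          case False
          have le: "en J i \<le> en C i" if "i < L - a" for i
          proof (rule ccontr)
            assume "\<not> en J i \<le> en C i"
            then have lt: "en C i < en J i" by simp
            have "ld (L-a) (\<lambda>i j. gg (a+i) (en C j)) = 0"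
            proof (rule ld_tri_zero[OF that])
              fix i' j assume i': "i \<le> i'" "i' < L - a" and j: "j \<le> i"
              have "en C j \<le> en C i" using en_mono_le[OF fC j] that cC by simp
              moreover have "en J i \<le> en J i'" using en_mono_le[OF fJ i'(1)] i' cJ by simp
              ultimately have "int (en C j) - int (en J i') < 0" using lt by simp
              then show "gg (a + i') (en C j) = 0"
                unfolding gg_def row_def using eneg by simp
            qed
            then show False using False by simp
          qed
          have sumJC: "\<Sum> J \<le> \<Sum> C"
          proof -
            have "(\<Sum>i<L-a. en J i) \<le> (\<Sum>i<L-a. en C i)" by (rule sum_mono) (use le in auto)
            then show ?thesis using sum_en[OF fJ] sum_en[OF fC] cJ cC by simp
          qed
          have tot1: "\<Sum> J + \<Sum> P = \<Sum> {..<L}" unfolding J_def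
            using sum.subset_diff[OF PL, of "\<lambda>x. x"] by simp
          have tot2: "\<Sum> C + \<Sum> S = \<Sum> {..<L}" unfolding C_def
            using sum.subset_diff[OF Ss, of "\<lambda>x. x"] by simp
          have SltP: "\<Sum> S < \<Sum> P"
          proof (rule ccontr)
            assume "\<not> \<Sum> S < \<Sum> P"
            then have eqs: "\<Sum> J = \<Sum> C" using sumJC tot1 tot2 by linarith
            have "en J i = en C i" if "i < L - a" for i
            proof (rule ccontr)
              assume "en J i \<noteq> en C i"
              then have "en J i < en C i" using le[OF that] by simp
              then have "(\<Sum>i<L-a. en J i) < (\<Sum>i<L-a. en C i)"
                using le that by (intro sum_strict_mono_ex1) auto
              then show False using eqs sum_en[OF fJ] sum_en[OF fC] cJ cC by simp
            qed
            then have "J = C" using en_eq_imp_eq[OF fJ fC] cJ cC by simp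
            then have "S = P" using Ss PL unfolding J_def C_def by blast
            then show False using SP by simp
          qed
          define kS where "kS j = k 0 - int (en S j)" for j
          have "M e a r kS = 0"
          proof -
            have sk: "sdec a kS" unfolding sdec_def
            proof (intro allI impI)
              fix i j assume "i < j" "j < a"
              then have "en S i < en S j" using en_mono[OF fS, of i j] cS by simp
              then show "kS j < kS i" unfolding kS_def by simp
            qed
            have k0: "kS 0 \<le> K" unfolding kS_def using kK by linarith
            have "(\<Sum>j<a. K - kS j) = (\<Sum>j<a. (K - k 0) + int (en S j))"
              unfolding kS_def by (intro sum.cong refl) linarith
            also have "\<dots> = int a * (K - k 0) + int (\<Sum> S)"
            proof -
              have "int (\<Sum> S) = int (\<Sum>j<a. en S j)" using sum_en[OF fS] cS by simp
              then show ?thesis by (simp add: sum.distrib)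
            qed
            finally have s1: "(\<Sum>j<a. K - kS j) = int a * (K - k 0) + int (\<Sum> S)" .
            have "(\<Sum>j<a. K - k j) = (\<Sum>j<a. (K - k 0) + int (en P j))"
            proof (rule sum.cong[OF refl])
              fix j assume "j \<in> {..<a}"
              then have "j < a" by simp
              then show "K - k j = K - k 0 + int (en P j)" using kpos[of j] enP[of j] by simp
            qed
            also have "\<dots> = int a * (K - k 0) + int (\<Sum> P)"
            proof -
              have "int (\<Sum> P) = int (\<Sum>j<a. en P j)" using sum_en[OF fP] cP by simp
              then show ?thesis by (simp add: sum.distrib)
            qed
            finally have s2: "(\<Sum>j<a. K - k j) = int a * (K - k 0) + int (\<Sum> P)" .
            have nn: "0 \<le> int a * (K - k 0)" using kK by simp
            have "nat (\<Sum>j<a. K - kS j) < m" unfolding mk[symmetric] s1 s2 using SltP nn by (simp del: of_nat_sum add: zless_nat_conj)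
            then show ?thesis using less.IH sk k0 by blast
          qed
          moreover have "ld a (\<lambda>i j. gg i (en S j)) = M e a r kS"
            unfolding M_def gg_def row_def kS_def by (rule ld_cong) simp
          ultimately show ?thesis unfolding F_def by simp
        qed
      qed
      have "(\<Sum>S\<in>?Sub. F S) = F P + (\<Sum>S\<in>?Sub - {P}. F S)"
        by (rule sum.remove[OF finSub PSub])
      also have "(\<Sum>S\<in>?Sub - {P}. F S) = 0" by (rule sum.neutral) (use rest in blast)
      finally have FP: "F P = 0" using lap big0 by simp
      have one: "ld (L-a) (\<lambda>i j. gg (a+i) (en ({..<L} - P) j)) = 1"
      proof (rule ld_unitri)
        fix i j assume ji: "j < i" "i < L - a"
        have "en J j < en J i" using en_mono[OF fJ ji(1)] ji cJ by simp
        then show "gg (a + i) (en ({..<L} - P) j) = 0"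
          unfolding gg_def row_def J_def[symmetric] using eneg by simp
      next
        fix i assume "i < L - a"
        show "gg (a + i) (en ({..<L} - P) i) = 1"
          unfolding gg_def row_def J_def[symmetric] using e0 by simp
      qed
      have "ld a (\<lambda>i j. gg i (en P j)) = M e a r k"
        unfolding M_def gg_def row_def by (rule ld_cong) (simp add: enP kpos')
      then have "of_int (sign (mg L a P)) * M e a r k = 0" using FP one unfolding F_def by simp
      then show "M e a r k = 0" by (rule sign_cancel)
    qed
  qed
  have "k1 0 \<le> K" using c1 unfolding K_def by simp
  then show "M e a r k1 = 0" using main k1 by blast
qed

definition conv :: "(int \<Rightarrow> 'a::comm_ring_1) \<Rightarrow> (int \<Rightarrow> 'a) \<Rightarrow> (int \<Rightarrow> 'a) \<Rightarrow> bool" where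
  "conv exy ex ey \<longleftrightarrow> (\<forall>m. exy m = (if m < 0 then 0 else (\<Sum>i\<le>nat m. ex (int i) * ey (m - int i))))"

lemma conv_window:
  assumes cv: "conv exy ex ey" and gx: "good ex" and gy: "good ey"
    and pW: "p \<le> W" and qW: "W - int N < q"
  shows "exy (p - q) = (\<Sum>t<N. ex (p - (W - int t)) * ey ((W - int t) - q))"
proof (cases "p < q")
  case True
  have "exy (p - q) = 0" using cv True unfolding conv_def by simp
  moreover have "(\<Sum>t<N. ex (p - (W - int t)) * ey ((W - int t) - q)) = 0"
  proof (rule sum.neutral, intro ballI)
    fix t assume "t \<in> {..<N}"
    show "ex (p - (W - int t)) * ey ((W - int t) - q) = 0"
    proof (cases "p - (W - int t) < 0")
      case True then show ?thesis using gx unfolding good_def by simp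
    next
      case False then have "(W - int t) - q < 0" using \<open>p < q\<close> by simp
      then show ?thesis using gy unfolding good_def by simp
    qed
  qed
  ultimately show ?thesis by simp
next
  case False
  define D where "D = nat (W - p)"
  define m where "m = nat (p - q)"
  have Dm: "int D = W - p" "int m = p - q" using False pW unfolding D_def m_def by auto
  have DmN: "D + m < N" using Dm qW by linarith
  define f where "f t = ex (p - (W - int t)) * ey ((W - int t) - q)" for t
  have "(\<Sum>t<N. f t) = (\<Sum>t\<in>{D..D+m}. f t)"
  proof (rule sum.mono_neutral_right)
    show "{D..D+m} \<subseteq> {..<N}" using DmN by auto
    show "\<forall>t\<in>{..<N} - {D..D+m}. f t = 0"
    proof
      fix t assume "t \<in> {..<N} - {D..D+m}"
      then have "t < D \<or> D + m < t" by auto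
      then show "f t = 0"
      proof
        assume "t < D" then have "p - (W - int t) < 0" using Dm by simp
        then show ?thesis using gx unfolding good_def f_def by simp
      next
        assume "D + m < t" then have "(W - int t) - q < 0" using Dm by simp
        then show ?thesis using gy unfolding good_def f_def by simp
      qed
    qed
  qed auto
  also have "\<dots> = (\<Sum>i\<le>m. f (D + i))"
  proof -
    have "{D..D+m} = (+) D ` {..m}"
    proof -
      have "(+) D ` {0..m} = {D..D+m}" by (simp add: add.commute)
      then show ?thesis by (simp add: atLeast0AtMost)
    qed
    then show ?thesis by (simp add: sum.reindex inj_on_def)
  qed
  also have "\<dots> = (\<Sum>i\<le>nat (p - q). ex (int i) * ey ((p - q) - int i))"
    unfolding m_def[symmetric] f_def by (rule sum.cong) (use Dm in \<open>auto simp: algebra_simps\<close>)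
  also have "\<dots> = exy (p - q)" using cv False unfolding conv_def by simp
  finally show ?thesis unfolding f_def by simp
qed


lemma Full_sum:
  assumes cv: "conv exy ex ey" and gx: "good ex" and gy: "good ey"
    and Bx: "Bot a b ex" and Ty: "Top c d ey" and a1: "1 \<le> a" and c1: "1 \<le> c"
  shows "Full (a + c) (b + d) exy"
  unfolding Full_def
proof (intro allI impI)
  let ?A = "a + c"
  fix r k assume r: "sdec ?A r" and k: "sdec ?A k" and cc: "int (b + d) \<le> r (?A-1) - k 0 + int ?A - 1"
  define W where "W = max (r 0) (k 0)"
  define N where "N = nat (W - k (?A - 1)) + 1"
  have rW: "i < ?A \<Longrightarrow> r i \<le> W" for i using sdec_le[OF r, of 0 i] unfolding W_def by simp
  have "k (?A - 1) \<le> k 0" using sdec_le[OF k, of 0 "?A - 1"] a1 by simp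
  then have kW: "k (?A - 1) \<le> W" unfolding W_def by simp
  have kN: "W - int N < k j" if "j < ?A" for j
  proof -
    have "j \<le> ?A - 1" "?A - 1 < ?A" using that a1 by auto
    then have "k (?A-1) \<le> k j" using sdec_le[OF k, of j "?A-1"] by simp
    then show ?thesis using kW unfolding N_def by simp
  qed
  have "M exy ?A r k = ld ?A (\<lambda>i j. \<Sum>t<N. ex (r i - (W - int t)) * ey ((W - int t) - k j))"
    unfolding M_def by (rule ld_cong) (rule conv_window[OF cv gx gy rW kN])
  also have "\<dots> = (\<Sum>S\<in>{S. S \<subseteq> {..<N} \<and> card S = ?A}.
      ld ?A (\<lambda>i j. ex (r i - (W - int (en S j)))) * ld ?A (\<lambda>i j. ey ((W - int (en S i)) - k j)))"
    by (rule cauchy_binet)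
  also have "\<dots> = 0"
  proof (rule sum.neutral, intro ballI)
    fix S assume S: "S \<in> {S. S \<subseteq> {..<N} \<and> card S = ?A}"
    then have Ss: "S \<subseteq> {..<N}" and cS: "card S = ?A" by auto
    have fS: "finite S" using Ss finite_subset by blast
    define u where "u j = W - int (en S j)" for j
    have u: "sdec ?A u" unfolding sdec_def
    proof (intro allI impI)
      fix i j assume "i < j" "j < ?A"
      then have "en S i < en S j" using en_mono[OF fS, of i j] cS by simp
      then show "u j < u i" unfolding u_def by simp
    qed
    have uc: "u c < u (c - 1)"
    proof -
      have "c - 1 < c" "c < ?A" using c1 a1 by auto
      then show ?thesis using u unfolding sdec_def by blast
    qed
    have "M ex ?A r u = 0 \<or> M ey ?A u k = 0"
    proof (cases "int b \<le> r (?A-1) - u (?A-a) + int a - 1")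
      case True
      then have "M ex ?A r u = 0" using Bx r u a1 unfolding Bot_def by simp
      then show ?thesis by simp
    next
      case False
      have "?A - a = c" by simp
      then have "int d \<le> u (c-1) - k 0 + int c - 1" using False cc uc by simp
      then have "M ey ?A u k = 0" using Ty u k unfolding Top_def by simp
      then show ?thesis by simp
    qed
    then show "ld ?A (\<lambda>i j. ex (r i - (W - int (en S j)))) * ld ?A (\<lambda>i j. ey ((W - int (en S i)) - k j)) = 0"
      unfolding M_def u_def by auto
  qed
  finally show "M exy ?A r k = 0" .
qed

lemma cnt_iff:
  fixes p :: "nat list"
  assumes "sorted_wrt (\<ge>) p" "i < length p"
  shows "i < length (filter (\<lambda>r. j < r) p) \<longleftrightarrow> j < p ! i"
  using assms
proof (induction p arbitrary: i)
  case Nil then show ?case by simp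
next
  case (Cons x xs)
  have xs: "sorted_wrt (\<ge>) xs" and le: "\<forall>y\<in>set xs. y \<le> x" using Cons.prems(1) by auto
  show ?case
  proof (cases "j < x")
    case True
    show ?thesis
    proof (cases i)
      case 0 then show ?thesis using True by simp
    next
      case (Suc i')
      then have "i' < length xs" using Cons.prems(2) by simp
      then show ?thesis using Cons.IH[OF xs] True Suc by simp
    qed
  next
    case False
    have "\<forall>y\<in>set xs. \<not> j < y"
    proof
      fix y assume "y \<in> set xs"
      then have "y \<le> x" using le by simp
      then show "\<not> j < y" using False by simp
    qed
    then have "filter (\<lambda>r. j < r) xs = []" by (simp add: filter_empty_conv)
    moreover have "(x # xs) ! i \<le> x"
    proof (cases i)
      case (Suc i')
      then have "i' < length xs" using Cons.prems(2) by simp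
      then show ?thesis using le Suc by auto
    qed simp
    ultimately show ?thesis using False by simp
  qed
qed

lemma length_filter_less_upt: "length (filter (\<lambda>j. j < v) [0..<h]) = min h v"
proof -
  have "length (filter (\<lambda>j. j < v) [0..<h]) = card {i. i < h \<and> [0..<h] ! i < v}"
    by (simp add: length_filter_conv_card)
  also have "{i. i < h \<and> [0..<h] ! i < v} = {i. i < h \<and> i < v}" by auto
  also have "{i. i < h \<and> i < v} = {..<min h v}" by auto
  finally show ?thesis by simp
qed

lemma length_filter_mono': "(\<And>x. P x \<Longrightarrow> Q x) \<Longrightarrow> length (filter P xs) \<le> length (filter Q xs)"
  by (induction xs) auto

lemma conj_part_is_partition: "is_partition (conj_part p)"
  unfolding is_partition_def
proof
  show "sorted_wrt (\<ge>) (conj_part p)"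
    unfolding conj_part_def sorted_wrt_map
    by (rule sorted_wrt_mono_rel[OF _ sorted_wrt_upt]) (auto intro: length_filter_mono')
  show "0 \<notin> set (conj_part p)"
  proof
    assume "0 \<in> set (conj_part p)"
    then obtain j where j: "j < hd p" "p \<noteq> []" "length (filter (\<lambda>r. j < r) p) = 0"
      unfolding conj_part_def by (auto split: if_splits)
    have "hd p \<in> set p" using j(2) by simp
    then show False using j by (auto simp: filter_empty_conv)
  qed
qed

lemma conj_conj:
  assumes "is_partition p"
  shows "conj_part (conj_part p) = p"
proof (cases "p = []")
  case True then show ?thesis by (simp add: conj_part_def)
next
  case False
  have sp: "sorted_wrt (\<ge>) p" and nz: "0 \<notin> set p" using assms unfolding is_partition_def by auto
  let ?c = "conj_part p"
  have c: "?c = map (\<lambda>j. length (filter (\<lambda>r. j < r) p)) [0..<hd p]"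
    using False by (simp add: conj_part_def)
  have hp: "0 < hd p" using nz False by (metis hd_in_set neq0_conv)
  have cne: "?c \<noteq> []" using c hp by simp
  have hdc: "hd ?c = length p"
  proof -
    have "hd ?c = length (filter (\<lambda>r. 0 < r) p)" using c hp by (simp add: hd_map upt_conv_Cons)
    also have "filter (\<lambda>r. 0 < r) p = p"
    proof (rule filter_True, rule ballI)
      fix x assume x: "x \<in> set p"
      show "0 < x" using nz x by (cases x) auto
    qed
    finally show ?thesis .
  qed
  have lc: "length ?c = hd p" using c by simp
  show ?thesis
  proof (rule nth_equalityI)
    show "length (conj_part ?c) = length p" using cne hdc by (simp add: conj_part_def)
    fix i assume "i < length (conj_part ?c)"
    then have i: "i < length p" using cne hdc by (simp add: conj_part_def)
    have "conj_part ?c ! i = length (filter (\<lambda>r. i < r) ?c)"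
      using cne hdc i by (simp add: conj_part_def)
    also have "filter (\<lambda>r. i < r) ?c = map (\<lambda>j. length (filter (\<lambda>r. j < r) p)) (filter (\<lambda>j. j < p ! i) [0..<hd p])"
      unfolding c filter_map o_def using cnt_iff[OF sp i] by (intro arg_cong[where f="map _"] filter_cong) auto
    also have "length \<dots> = min (hd p) (p ! i)" by (simp add: length_filter_less_upt)
    also have "\<dots> = p ! i"
    proof -
      have "p ! i \<le> p ! 0" using sp i by (cases i) (auto simp: sorted_wrt_iff_nth_less)
      then show ?thesis using False by (simp add: hd_conv_nth)
    qed
    finally show "conj_part ?c ! i = p ! i" .
  qed
qed

lemma ld_last_unit:
  assumes z: "\<And>j. j < m \<Longrightarrow> f m j = 0" and o: "f m m = 1"
  shows "ld (Suc m) f = ld m f"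
proof -
  let ?A = "mat (Suc m) (Suc m) (\<lambda>(i,j). f i j)"
  have A: "?A \<in> carrier_mat (Suc m) (Suc m)" by simp
  have "det ?A = (\<Sum>j<Suc m. ?A $$ (m,j) * cofactor ?A m j)"
    by (rule laplace_expansion_row[OF A]) simp
  also have "\<dots> = ?A $$ (m,m) * cofactor ?A m m + (\<Sum>j<m. ?A $$ (m,j) * cofactor ?A m j)"
    by simp
  also have "(\<Sum>j<m. ?A $$ (m,j) * cofactor ?A m j) = 0"
    by (rule sum.neutral) (auto simp: z)
  also have "?A $$ (m,m) * cofactor ?A m m = det (mat_delete ?A m m)"
    by (simp add: o cofactor_def)
  also have "mat_delete ?A m m = mat m m (\<lambda>(i,j). f i j)"
    by (rule eq_matI) (auto simp: mat_delete_def)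
  finally show ?thesis by (simp add: det_ld)
qed

lemma schur_M:
  "schur lam q z = M (\<lambda>m. lam_int lam m z) (length (conj_part q))
      (\<lambda>i. int (conj_part q ! i) - int i) (\<lambda>j. - int j)"
proof -
  have "schur lam q z = det (mat (length (conj_part q)) (length (conj_part q))
      (\<lambda>(i,j). (\<lambda>i j. lam_int lam ((int (conj_part q ! i) - int i) - (- int j)) z) i j))"
    unfolding schur_def Let_def by (simp add: algebra_simps)
  also have "\<dots> = M (\<lambda>m. lam_int lam m z) (length (conj_part q))
      (\<lambda>i. int (conj_part q ! i) - int i) (\<lambda>j. - int j)"
    unfolding det_ld M_def ..
  finally show ?thesis .
qed

lemma good_E: "lambda_ring lam \<Longrightarrow> good (\<lambda>m. lam_int lam m z)"
  unfolding good_def lambda_ring_def lam_int_def by simp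

lemma conv_E:
  assumes "lambda_ring lam"
  shows "conv (\<lambda>m. lam_int lam m (x + y)) (\<lambda>m. lam_int lam m x) (\<lambda>m. lam_int lam m y)"
  unfolding conv_def
proof
  fix m :: int
  have add: "lam n (x + y) = (\<Sum>i\<le>n. lam i x * lam (n - i) y)" for n
    using assms unfolding lambda_ring_def by blast
  show "lam_int lam m (x + y) = (if m < 0 then 0 else
      \<Sum>i\<le>nat m. lam_int lam (int i) x * lam_int lam (m - int i) y)"
  proof (cases "m < 0")
    case True then show ?thesis by (simp add: lam_int_def)
  next
    case False
    have "lam_int lam m (x + y) = (\<Sum>i\<le>nat m. lam i x * lam (nat m - i) y)"
      using False add by (simp add: lam_int_def)
    also have "\<dots> = (\<Sum>i\<le>nat m. lam_int lam (int i) x * lam_int lam (m - int i) y)"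
    proof (rule sum.cong[OF refl])
      fix i assume "i \<in> {..nat m}"
      then have "\<not> m - int i < 0" "nat (m - int i) = nat m - i" using False by auto
      then show "lam i x * lam (nat m - i) y = lam_int lam (int i) x * lam_int lam (m - int i) y"
        by (simp add: lam_int_def)
    qed
    finally show ?thesis using False by simp
  qed
qed


lemma sdec_c:
  assumes "sdec n r" "i \<le> j" "j < n"
  shows "r j + int j \<le> r i + int i"
  using assms(2,3)
proof (induction j rule: dec_induct)
  case base then show ?case by simp
next
  case (step j)
  have "r (Suc j) < r j" using assms(1) step unfolding sdec_def by simp
  then show ?case using step by simp
qed

lemma Str_sf:
  assumes A1: "1 \<le> A" and B1: "1 \<le> B" and St: "Str A B (\<lambda>m. lam_int lam m w)"
  shows "schur_finite lam w"
  unfolding schur_finite_def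
proof (intro exI conjI allI impI)
  let ?la = "replicate B A"
  show "is_partition ?la" using A1 unfolding is_partition_def
    by (auto simp: sorted_wrt_iff_nth_less)
  fix q assume qq: "is_partition q \<and> part_contains q ?la"
  then have sq: "sorted_wrt (\<ge>) q" and Bq: "B \<le> length q" and Aq: "\<And>i. i < B \<Longrightarrow> A \<le> q ! i"
    unfolding is_partition_def part_contains_def by auto
  have qne: "q \<noteq> []" using Bq B1 by auto
  let ?c = "conj_part q"
  have c: "?c = map (\<lambda>j. length (filter (\<lambda>r. j < r) q)) [0..<hd q]"
    using qne by (simp add: conj_part_def)
  have lc: "length ?c = hd q" using c by simp
  have cn: "j < hd q \<Longrightarrow> ?c ! j = length (filter (\<lambda>r. j < r) q)" for j using c by simp
  have hq: "A \<le> hd q" using Aq[of 0] B1 qne by (simp add: hd_conv_nth)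
  define r where "r i = int (?c ! i) - int i" for i
  have sd: "sdec (length ?c) r" unfolding sdec_def
  proof (intro allI impI)
    fix i j assume ij: "i < j" "j < length ?c"
    have "?c ! j \<le> ?c ! i" using ij lc cn[of i] cn[of j] by (simp add: length_filter_mono')
    then show "r j < r i" using ij unfolding r_def by simp
  qed
  have "B - 1 < length (filter (\<lambda>r. A - 1 < r) q)"
    using cnt_iff[OF sq, of "B - 1" "A - 1"] Bq B1 Aq[of "B - 1"] A1 by simp
  then have "B \<le> ?c ! (A - 1)" using cn[of "A - 1"] hq A1 by simp
  then have cond: "int B \<le> r (A-1) + int A - 1" unfolding r_def using A1 by simp
  have "M (\<lambda>m. lam_int lam m w) (length ?c) r (\<lambda>j. - int j) = 0"
    using St sd hq lc cond unfolding Str_def by simp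
  then show "schur lam q w = 0" unfolding schur_M r_def .
qed


lemma sf_Str:
  assumes lr: "lambda_ring lam" and sf: "schur_finite lam z"
  shows "\<exists>a b. 1 \<le> a \<and> 1 \<le> b \<and> Str a b (\<lambda>m. lam_int lam m z)"
proof -
  obtain la where lap: "is_partition la"
    and van: "\<And>q. is_partition q \<Longrightarrow> part_contains q la \<Longrightarrow> schur lam q z = 0"
    using sf unfolding schur_finite_def by blast
  let ?e = "\<lambda>m. lam_int lam m z"
  have g: "good ?e" by (rule good_E[OF lr])
  have e0: "?e 0 = 1" and eneg: "\<And>m. m < 0 \<Longrightarrow> ?e m = 0" using g unfolding good_def by auto
  define a where "a = Suc (sum_list la)"
  define b where "b = Suc (length la)"
  have "Str a b ?e"
    unfolding Str_def
  proof (rule allI)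
    fix n
    show "\<forall>r. sdec n r \<longrightarrow> a \<le> n \<longrightarrow> int b \<le> r (a - 1) + int a - 1 \<longrightarrow> M ?e n r (\<lambda>j. - int j) = 0"
    proof (induction n)
      case 0 then show ?case unfolding a_def by simp
    next
      case (Suc m)
      show ?case
      proof (intro allI impI)
        fix r assume r: "sdec (Suc m) r" and an: "a \<le> Suc m" and cd: "int b \<le> r (a - 1) + int a - 1"
        have a1: "1 \<le> a" "1 \<le> b" unfolding a_def b_def by auto
        have ca: "int b \<le> r (a-1) + int (a-1)" using cd a1 by simp
        consider "r m + int m < 0" | "r m + int m = 0" | "0 < r m + int m" by linarith
        then show "M ?e (Suc m) r (\<lambda>j. - int j) = 0"
        proof cases
          case 1
          show ?thesis unfolding M_def
          proof (rule ld_tri_zero[of m])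
            fix i j assume "m \<le> i" "i < Suc m" "j \<le> m"
            then have "i = m" by simp
            then have "r i - - int j < 0" using 1 \<open>j \<le> m\<close> by simp
            then show "?e (r i - - int j) = 0" by (rule eneg)
          qed simp
        next
          case 2
          have am: "a \<le> m"
          proof (rule ccontr)
            assume "\<not> a \<le> m"
            then have "a - 1 = m" using an by simp
            then show False using ca 2 a1 by simp
          qed
          have "M ?e (Suc m) r (\<lambda>j. - int j) = M ?e m r (\<lambda>j. - int j)"
            unfolding M_def
          proof (rule ld_last_unit)
            fix j assume "j < m"
            then have "r m - - int j < 0" using 2 by simp
            then show "?e (r m - - int j) = 0" by (rule eneg)
          next
            show "?e (r m - - int m) = 1" using 2 e0 by simp
          qed
          also have "\<dots> = 0" using Suc.IH sdec_mono[OF r, of m] am cd by simp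
          finally show ?thesis .
        next
          case 3
          define c where "c i = r i + int i" for i
          have cpos: "i < Suc m \<Longrightarrow> 0 < c i" for i
            using sdec_c[OF r, of i m] 3 unfolding c_def by simp
          have cdec: "i \<le> j \<Longrightarrow> j < Suc m \<Longrightarrow> c j \<le> c i" for i j
            using sdec_c[OF r] unfolding c_def by simp
          define cl where "cl = map (\<lambda>i. nat (c i)) [0..<Suc m]"
          have lcl: "length cl = Suc m" unfolding cl_def by simp
          have cli: "i < Suc m \<Longrightarrow> cl ! i = nat (c i)" for i unfolding cl_def by (simp del: upt_Suc)
          have pcl: "is_partition cl" unfolding is_partition_def
          proof
            show "sorted_wrt (\<ge>) cl" unfolding sorted_wrt_iff_nth_less lcl
              using cli cdec by (auto intro: nat_mono)
            show "0 \<notin> set cl"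
            proof
              assume "0 \<in> set cl"
              then obtain i where i: "i < Suc m" "nat (c i) = 0" unfolding cl_def
                by (auto simp del: upt_Suc)
              then show False using cpos[OF i(1)] by simp
            qed
          qed
          define q where "q = conj_part cl"
          have pq: "is_partition q" unfolding q_def by (rule conj_part_is_partition)
          have cq: "conj_part q = cl" unfolding q_def by (rule conj_conj[OF pcl])
          have scl: "sorted_wrt (\<ge>) cl" using pcl unfolding is_partition_def by simp
          have am1: "a - 1 < Suc m" using an a1 by simp
          have bcl: "b \<le> cl ! (a - 1)" using cli[OF am1] ca unfolding c_def by simp
          have "cl \<noteq> []" using lcl by (cases cl) auto
          then have hcl: "hd cl = cl ! 0" by (rule hd_conv_nth)
          have c0: "cl ! (a - 1) \<le> cl ! 0" using scl am1 lcl
            by (cases "a - 1") (auto simp: sorted_wrt_iff_nth_less)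
          have qdef: "q = map (\<lambda>j. length (filter (\<lambda>r. j < r) cl)) [0..<hd cl]"
            unfolding q_def conj_part_def using lcl by auto
          have "part_contains q la" unfolding part_contains_def
          proof
            show "length la \<le> length q" unfolding qdef using bcl c0 hcl unfolding b_def by simp
            show "\<forall>i<length la. la ! i \<le> q ! i"
            proof (intro allI impI)
              fix i assume i: "i < length la"
              have ih: "i < hd cl" using i bcl c0 hcl unfolding b_def by simp
              have "a - 1 < length (filter (\<lambda>r. i < r) cl)"
                using cnt_iff[OF scl, of "a - 1" i] am1 lcl bcl i unfolding b_def by simp
              then have "a \<le> q ! i" unfolding qdef using ih a1 by simp
              moreover have "la ! i \<le> sum_list la" by (rule elem_le_sum_list[OF i])
              ultimately show "la ! i \<le> q ! i" unfolding a_def by simp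
            qed
          qed
          then have "schur lam q z = 0" using van pq by blast
          then have "M ?e (Suc m) (\<lambda>i. int (cl ! i) - int i) (\<lambda>j. - int j) = 0"
            unfolding schur_M cq lcl .
          moreover have "M ?e (Suc m) (\<lambda>i. int (cl ! i) - int i) (\<lambda>j. - int j) = M ?e (Suc m) r (\<lambda>j. - int j)"
            unfolding M_def
          proof (rule ld_cong)
            fix i j assume "i < Suc m" "j < Suc m"
            then have "0 < c i" "cl ! i = nat (c i)" using cli cpos by auto
            then have "int (cl ! i) - int i = r i" unfolding c_def by simp
            then show "?e (int (cl ! i) - int i - - int j) = ?e (r i - - int j)" by simp
          qed
          ultimately show ?thesis by simp
        qed
      qed
    qed
  qed
  moreover have "1 \<le> a" "1 \<le> b" unfolding a_def b_def by auto
  ultimately show ?thesis by blast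
qed

theorem lemma4:
  fixes lam :: "nat \<Rightarrow> 'a::comm_ring_1 \<Rightarrow> 'a" and x y :: 'a
  assumes "lambda_ring lam"
    and "schur_finite lam x"
    and "schur_finite lam y"
  shows "schur_finite lam (x + y)"
proof -
  obtain a b where a: "1 \<le> a" "1 \<le> b" and Sx: "Str a b (\<lambda>m. lam_int lam m x)"
    using sf_Str[OF assms(1,2)] by blast
  obtain c d where c: "1 \<le> c" "1 \<le> d" and Sy: "Str c d (\<lambda>m. lam_int lam m y)"
    using sf_Str[OF assms(1,3)] by blast
  have Fx: "Full a (max a b) (\<lambda>m. lam_int lam m x)"
    by (rule Str_Full[OF Str_mono[OF Sx] a(1) _ good_E[OF assms(1)]]) auto
  have Fy: "Full c (max c d) (\<lambda>m. lam_int lam m y)"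
    by (rule Str_Full[OF Str_mono[OF Sy] c(1) _ good_E[OF assms(1)]]) auto
  have Bx: "Bot a (max a b) (\<lambda>m. lam_int lam m x)"
    by (rule Top_Bot[OF Full_Top[OF Fx a(1)] a(1)])
  have Ty: "Top c (max c d) (\<lambda>m. lam_int lam m y)"
    by (rule Full_Top[OF Fy c(1)])
  have F: "Full (a + c) (max a b + max c d) (\<lambda>m. lam_int lam m (x + y))"
    by (rule Full_sum[OF conv_E[OF assms(1)] good_E[OF assms(1)] good_E[OF assms(1)] Bx Ty a(1) c(1)])
  have "Str (a + c) (max a b + max c d) (\<lambda>m. lam_int lam m (x + y))"
    by (rule Top_Str[OF Full_Top[OF F]]) (use a in simp)
  then show ?thesis by (rule Str_sf[where lam=lam and w="x+y", rotated 2]) (use a c in auto)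
qed

end
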